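(* Let $K \ge 1$ and let $\mathbf{\Phi} \in \mathbb{R}^{m\times n}$ satisfy the RIP with $\delta_{K+1} < \frac{1}{\sqrt{K}+1}$. Let $\mathbf{x} \in \mathbb{R}^n$ with $|\mathrm{supp}(\mathbf{x})| = K$, let $\mathbf{v} \in \mathbb{R}^m$, and let $\mathbf{y} = \mathbf{\Phi}\mathbf{x} + \mathbf{v}$. If $$\sqrt{\mathrm{SNR}} > \frac{2\sqrt{K}\,(1+\delta_{K+1})}{\bigl(1-(\sqrt{K}+1)\delta_{K+1}\bigr)\sqrt{\mathrm{MAR}}},$$ then OMP run for $K$ iterations on $(\mathbf{\Phi},\mathbf{y},K)$ selects an index of $\mathrm{supp}(\mathbf{x})$ at every iteration (regardless of how ties are broken), so that its output satisfies $\mathcal{T}^K = \mathrm{supp}(\mathbf{x})$.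
   Context: Notation: $\Omega=\{1,\dots,n\}$; $\phi_i$ denotes the $i$-th column of $\mathbf{\Phi}$; $\mathbf{\Phi}'$ is the transpose; for $\mathcal{S}\subseteq\Omega$, $\mathbf{\Phi}_{\mathcal{S}}$ is the submatrix of columns indexed by $\mathcal{S}$ and $\mathbf{x}_{\mathcal{S}}$ the restriction of $\mathbf{x}$ to $\mathcal{S}$. A vector is $K$-sparse if it has at most $K$ nonzero entries. RIP: for an integer $s\ge1$, the isometry constant $\delta_s$ of $\mathbf{\Phi}$ is the smallest $c\in[0,1)$ such that $(1-c)\|\mathbf{z}\|_2^2 \le \|\mathbf{\Phi}\mathbf{z}\|_2^2 \le (1+c)\|\mathbf{z}\|_2^2$ for all $s$-sparse $\mathbf{z}\in\mathbb{R}^n$; "$\mathbf{\Phi}$ satisfies the RIP with $\delta_s<a$" means such a constant exists and is $<a$. $\mathrm{SNR} := \|\mathbf{\Phi}\mathbf{x}\|_2^2/\|\mathbf{v}\|_2^2$ (taken as $+\infty$ if $\mathbf{v}=\mathbf{0}$), and with $\mathcal{T}=\mathrm{supp}(\mathbf{x})$, $\mathrm{MAR} := \dfrac{\min_{j\in\mathcal{T}}|x_j|^2}{\|\mathbf{x}\|_2^2/K}$. OMP (orthogonal matching pursuit) with input $\mathbf{\Phi},\mathbf{y},K$: set $\mathcal{T}^0=\emptyset$, $\mathbf{r}^0=\mathbf{y}$; for $k=1,\dots,K$: choose $t^k \in \arg\max_{i\in\Omega\setminus\mathcal{T}^{k-1}} |\langle\phi_i,\mathbf{r}^{k-1}\rangle|$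 (ties broken arbitrarily), set $\mathcal{T}^k=\mathcal{T}^{k-1}\cup\{t^k\}$, $\mathbf{x}^k = \arg\min_{\mathbf{u}:\,\mathrm{supp}(\mathbf{u})\subseteq\mathcal{T}^k}\|\mathbf{y}-\mathbf{\Phi}\mathbf{u}\|_2$ (least squares on $\mathcal{T}^k$), and $\mathbf{r}^k=\mathbf{y}-\mathbf{\Phi}\mathbf{x}^k$. Output: $\mathcal{T}^K$ and $\mathbf{x}^K$. *)

theory Defs
  imports "HOL-Analysis.Analysis"
begin

definition supp :: "real^'n \<Rightarrow> 'n set" where
  "supp z = {i. z $ i \<noteq> 0}"

definition sparse :: "nat \<Rightarrow> real^'n \<Rightarrow> bool" where
  "sparse s z \<longleftrightarrow> card (supp z) \<le> s"

definition rip_bound :: "real^'n^'m \<Rightarrow> nat \<Rightarrow> real \<Rightarrow> bool" where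
  "rip_bound Phi s c \<longleftrightarrow> 0 \<le> c \<and> c < 1 \<and>
     (\<forall>z. sparse s z \<longrightarrow>
        (1 - c) * norm z ^ 2 \<le> norm (Phi *v z) ^ 2 \<and>
        norm (Phi *v z) ^ 2 \<le> (1 + c) * norm z ^ 2)"

definition rip_delta :: "real^'n^'m \<Rightarrow> nat \<Rightarrow> real" where
  "rip_delta Phi s = Inf {c. rip_bound Phi s c}"

text \<open>Least-squares residual on index set T (unique, independent of the minimiser chosen).\<close>
definition ls_residual :: "real^'n^'m \<Rightarrow> real^'m \<Rightarrow> 'n set \<Rightarrow> real^'m" where
  "ls_residual Phi y T = y - Phi *v (SOME u. supp u \<subseteq> T \<and>
      (\<forall>w. supp w \<subseteq> T \<longrightarrow> norm (y - Phi *v u) \<le> norm (y - Phi *v w)))"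

text \<open>t 1, ..., t K is a valid run of OMP (any tie-breaking) on (Phi, y, K).\<close>
definition omp_run :: "real^'n^'m \<Rightarrow> real^'m \<Rightarrow> nat \<Rightarrow> (nat \<Rightarrow> 'n) \<Rightarrow> bool" where
  "omp_run Phi y K t \<longleftrightarrow>
     (\<forall>k\<in>{1..K}.
        let Tprev = t ` {1..<k}; r = ls_residual Phi y Tprev in
        t k \<notin> Tprev \<and>
        (\<forall>i. i \<notin> Tprev \<longrightarrow> \<bar>column i Phi \<bullet> r\<bar> \<le> \<bar>column (t k) Phi \<bullet> r\<bar>))"

definition MAR :: "real^'n \<Rightarrow> real" where
  "MAR x = Min ((\<lambda>j. \<bar>x $ j\<bar> ^ 2) ` supp x) / (norm x ^ 2 / real (card (supp x)))"

end

theory Submission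
  imports Defs
begin

definition restr :: "'n set \<Rightarrow> real^'n \<Rightarrow> real^'n" where
  "restr S z = (\<chi> i. if i \<in> S then z $ i else 0)"

lemma supp_add: "supp (a + b) \<subseteq> supp a \<union> supp b"
  by (auto simp: supp_def)
lemma supp_diff: "supp (a - b) \<subseteq> supp a \<union> supp b"
  by (auto simp: supp_def)
lemma supp_scale: "supp (c *\<^sub>R a) \<subseteq> supp a"
  by (auto simp: supp_def)
lemma supp_zero[simp]: "supp 0 = {}"
  by (auto simp: supp_def)
lemma supp_axis: "supp (axis j c) \<subseteq> {j}"
  by (auto simp: supp_def axis_def)
lemma supp_restr: "supp (restr S z) \<subseteq> S \<inter> supp z"
  by (auto simp: supp_def restr_def)

lemma norm_sq_vec: "norm (z::real^'n) ^ 2 = (\<Sum>i\<in>UNIV. (z $ i)^2)"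
  by (simp add: norm_vec_def L2_set_def sum_nonneg)

lemma norm_sq_supp: "supp z \<subseteq> A \<Longrightarrow> norm (z::real^'n) ^ 2 = (\<Sum>i\<in>A. (z $ i)^2)"
  unfolding norm_sq_vec
  by (rule sum.mono_neutral_right) (auto simp: supp_def)

lemma mult_inner: "(Phi *v z) \<bullet> r = (\<Sum>i\<in>UNIV. z $ i * (column i Phi \<bullet> r))"
  by (simp add: matrix_mult_sum inner_sum_left scalar_mult_eq_scaleR)

lemma mult_inner_supp: "supp z \<subseteq> A \<Longrightarrow> (Phi *v z) \<bullet> r = (\<Sum>i\<in>A. z $ i * (column i Phi \<bullet> r))"
  unfolding mult_inner
  by (rule sum.mono_neutral_right) (auto simp: supp_def)

lemma norm_restr_le: "norm (restr S z) ^ 2 \<le> norm z ^ 2"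
  unfolding norm_sq_vec by (rule sum_mono) (auto simp: restr_def)

lemma norm_ge_restr: "norm (restr S z) \<le> norm z"
  using norm_restr_le[of S z] by (simp add: power_mono_iff)

lemma supp_sub_add: "supp a \<subseteq> T \<Longrightarrow> supp b \<subseteq> T \<Longrightarrow> supp (a + b) \<subseteq> T"
  using supp_add[of a b] by blast
lemma supp_sub_diff: "supp a \<subseteq> T \<Longrightarrow> supp b \<subseteq> T \<Longrightarrow> supp (a - b) \<subseteq> T"
  using supp_diff[of a b] by blast
lemma supp_sub_scale: "supp a \<subseteq> T \<Longrightarrow> supp (c *\<^sub>R a) \<subseteq> T"
  using supp_scale[of c a] by blast

lemma rip_delta_bound:
  assumes "\<exists>c. rip_bound Phi s c"
  shows "rip_bound Phi s (rip_delta Phi s)"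
proof -
  let ?C = "{c. rip_bound Phi s c}"
  obtain c0 where c0: "rip_bound Phi s c0" using assms by blast
  have ne: "?C \<noteq> {}" using c0 by blast
  have bdd: "bdd_below ?C" by (rule bdd_belowI[of _ 0]) (auto simp: rip_bound_def)
  have d0: "0 \<le> rip_delta Phi s" unfolding rip_delta_def
    by (rule cInf_greatest[OF ne]) (auto simp: rip_bound_def)
  have d1: "rip_delta Phi s \<le> c0" unfolding rip_delta_def
    by (rule cInf_lower[OF _ bdd]) (use c0 in auto)
  have c01: "c0 < 1" using c0 by (auto simp: rip_bound_def)
  show ?thesis unfolding rip_bound_def
  proof (intro conjI allI impI)
    show "0 \<le> rip_delta Phi s" by fact
    show "rip_delta Phi s < 1" using d1 c01 by linarith
  next
    fix z :: "real^'a" assume sp: "sparse s z"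
    show "(1 - rip_delta Phi s) * (norm z)\<^sup>2 \<le> (norm (Phi *v z))\<^sup>2"
    proof (rule ccontr)
      assume "\<not> ?thesis"
      hence lt: "(norm (Phi *v z))\<^sup>2 < (1 - rip_delta Phi s) * (norm z)\<^sup>2" by simp
      have "norm z \<noteq> 0"
      proof
        assume "norm z = 0" thus False using lt by simp
      qed
      hence N: "(norm z)\<^sup>2 > 0" by simp
      have "rip_delta Phi s < 1 - (norm (Phi *v z))\<^sup>2 / (norm z)\<^sup>2"
        using lt N by (simp add: field_simps)
      then obtain c where c: "rip_bound Phi s c" "c < 1 - (norm (Phi *v z))\<^sup>2 / (norm z)\<^sup>2"
        unfolding rip_delta_def using cInf_less_iff[OF ne bdd] by auto
      hence "(1 - c) * (norm z)\<^sup>2 \<le> (norm (Phi *v z))\<^sup>2" using sp by (auto simp: rip_bound_def)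
      moreover have "(1 - c) * (norm z)\<^sup>2 > (norm (Phi *v z))\<^sup>2"
        using c(2) N by (simp add: field_simps)
      ultimately show False by simp
    qed
    show "(norm (Phi *v z))\<^sup>2 \<le> (1 + rip_delta Phi s) * (norm z)\<^sup>2"
    proof (cases "norm z = 0")
      case True thus ?thesis by simp
    next
      case False
      hence N: "(norm z)\<^sup>2 > 0" by simp
      have "(norm (Phi *v z))\<^sup>2 / (norm z)\<^sup>2 - 1 \<le> rip_delta Phi s" unfolding rip_delta_def
      proof (rule cInf_greatest[OF ne])
        fix c assume "c \<in> ?C"
        hence "(norm (Phi *v z))\<^sup>2 \<le> (1 + c) * (norm z)\<^sup>2" using sp by (auto simp: rip_bound_def)
        thus "(norm (Phi *v z))\<^sup>2 / (norm z)\<^sup>2 - 1 \<le> c" using N by (simp add: field_simps)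
      qed
      thus ?thesis using N by (simp add: field_simps)
    qed
  qed
qed

lemma min_orth:
  fixes Phi :: "real^'n^'m"
  assumes "supp a \<subseteq> Tp"
    and min: "\<forall>w. supp w \<subseteq> Tp \<longrightarrow> norm (b - Phi *v a) \<le> norm (b - Phi *v w)"
    and w: "supp w \<subseteq> Tp"
  shows "(b - Phi *v a) \<bullet> (Phi *v w) = 0"
proof -
  define r where "r = b - Phi *v a"
  define c where "c = r \<bullet> (Phi *v w)"
  define N where "N = (norm (Phi *v w))\<^sup>2"
  have key: "2 * t * c \<le> t^2 * N" for t
  proof -
    have "supp (a + t *\<^sub>R w) \<subseteq> Tp"
      using assms(1) w by (intro supp_sub_add supp_sub_scale)
    hence "norm r \<le> norm (b - Phi *v (a + t *\<^sub>R w))" using min unfolding r_def by blast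
    also have "b - Phi *v (a + t *\<^sub>R w) = r - t *\<^sub>R (Phi *v w)"
      by (simp add: r_def matrix_vector_right_distrib matrix_vector_mult_scaleR)
    finally have "(norm r)\<^sup>2 \<le> (norm (r - t *\<^sub>R (Phi *v w)))\<^sup>2"
      by (simp add: power_mono)
    also have "\<dots> = (norm r)\<^sup>2 - 2 * t * c + t^2 * N"
      unfolding c_def N_def power2_norm_eq_inner
      by (simp add: inner_diff_left inner_diff_right inner_commute power2_eq_square algebra_simps)
    finally show ?thesis by simp
  qed
  have N0: "N \<ge> 0" unfolding N_def by simp
  show ?thesis
  proof (rule ccontr)
    assume "\<not> ?thesis"
    hence c0: "c \<noteq> 0" unfolding c_def r_def by simp
    have h: "2 * (c / (N+1)) * c \<le> (c/(N+1))^2 * N" by (rule key)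
    have N1: "N + 1 > 0" using N0 by simp
    have "2 * (c / (N+1)) * c * (N+1)^2 \<le> (c/(N+1))^2 * N * (N+1)^2"
      using h by (rule mult_right_mono) simp
    also have "(c/(N+1))^2 * N * (N+1)^2 = c^2 * N"
      using N1 by (simp add: power_divide)
    also have "2 * (c / (N+1)) * c * (N+1)^2 = 2 * c^2 * (N+1)"
      using N1 by (simp add: power2_eq_square field_simps)
    finally have "2 * c^2 * (N+1) \<le> c^2 * N" .
    moreover have "c^2 > 0" using c0 by simp
    moreover have "c^2 * N \<ge> 0" using N0 by simp
    moreover have "2*c^2*(N+1) = 2*(c^2*N) + 2*c^2" by (simp add: algebra_simps)
    ultimately show False by linarith
  qed
qed

lemma orth_exists:
  fixes Phi :: "real^'n^'m"
  shows "\<exists>a. supp a \<subseteq> Tp \<and> (\<forall>w. supp w \<subseteq> Tp \<longrightarrow> (b - Phi *v a) \<bullet> (Phi *v w) = 0)"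
proof -
  define V where "V = (\<lambda>w. Phi *v w) ` {w. supp w \<subseteq> Tp}"
  have sub: "subspace {w::real^'n. supp w \<subseteq> Tp}"
    unfolding subspace_def by (simp add: supp_sub_add supp_sub_scale)
  have "subspace V" unfolding V_def
    by (rule linear_subspace_image[OF _ sub]) (simp add: matrix_vector_mul_linear)
  hence cl: "closed V" by (rule closed_subspace)
  have ne: "V \<noteq> {}" unfolding V_def by (auto intro!: exI[of _ 0])
  define p where "p = closest_point V b"
  have pV: "p \<in> V" and pmin: "\<forall>y\<in>V. dist b p \<le> dist b y"
    using closest_point_exists[OF cl ne] unfolding p_def by auto
  obtain a where a: "supp a \<subseteq> Tp" "p = Phi *v a" using pV unfolding V_def by auto
  have min: "\<forall>w. supp w \<subseteq> Tp \<longrightarrow> norm (b - Phi *v a) \<le> norm (b - Phi *v w)"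
    using pmin a unfolding V_def by (auto simp: dist_norm)
  show ?thesis using min_orth[OF a(1) min] a(1) by blast
qed

lemma pyth_le:
  fixes Phi :: "real^'n^'m"
  assumes orth: "\<forall>w. supp w \<subseteq> Tp \<longrightarrow> z \<bullet> (Phi *v w) = 0"
    and zq: "z = q - Phi *v c" and c: "supp c \<subseteq> Tp"
  shows "(norm z)\<^sup>2 \<le> (norm q)\<^sup>2"
proof -
  have q: "q = z + Phi *v c" using zq by simp
  have "z \<bullet> (Phi *v c) = 0" using orth c by blast
  hence "(norm q)\<^sup>2 = (norm z)\<^sup>2 + (norm (Phi *v c))\<^sup>2"
    unfolding q power2_norm_eq_inner by (simp add: inner_add_left inner_add_right inner_commute)
  thus ?thesis by simp
qed

lemma ls_props:
  fixes Phi :: "real^'n^'m"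
  shows "\<exists>a. supp a \<subseteq> Tp \<and> ls_residual Phi y Tp = y - Phi *v a \<and>
     (\<forall>w. supp w \<subseteq> Tp \<longrightarrow> ls_residual Phi y Tp \<bullet> (Phi *v w) = 0)"
proof -
  let ?P = "\<lambda>u. supp u \<subseteq> Tp \<and>
      (\<forall>w. supp w \<subseteq> Tp \<longrightarrow> norm (y - Phi *v u) \<le> norm (y - Phi *v w))"
  obtain a0 where a0: "supp a0 \<subseteq> Tp" "\<forall>w. supp w \<subseteq> Tp \<longrightarrow> (y - Phi *v a0) \<bullet> (Phi *v w) = 0"
    using orth_exists[of Tp y Phi] by blast
  have "?P a0"
  proof (intro conjI allI impI)
    fix w :: "real^'n" assume w: "supp w \<subseteq> Tp"
    have "y - Phi *v a0 = (y - Phi *v w) - Phi *v (a0 - w)"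
      by (simp add: matrix_vector_mult_diff_distrib)
    hence "(norm (y - Phi *v a0))\<^sup>2 \<le> (norm (y - Phi *v w))\<^sup>2"
      by (rule pyth_le[OF a0(2)]) (use a0(1) w in \<open>rule supp_sub_diff\<close>)
    thus "norm (y - Phi *v a0) \<le> norm (y - Phi *v w)"
      by (simp add: power_mono_iff)
  qed (fact a0(1))
  hence ex: "\<exists>u. ?P u" by blast
  define a where "a = (SOME u. ?P u)"
  have Pa: "?P a" unfolding a_def using someI_ex[OF ex] .
  have res: "ls_residual Phi y Tp = y - Phi *v a" unfolding ls_residual_def a_def ..
  show ?thesis
    using Pa res min_orth[of a Tp y Phi] by auto
qed

lemma rip_lo:
  assumes "rip_bound Phi s d" "card (supp z) \<le> s"
  shows "(1 - d) * (norm z)\<^sup>2 \<le> (norm (Phi *v z))\<^sup>2"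
  using assms by (auto simp: rip_bound_def sparse_def)

lemma rip_hi:
  assumes "rip_bound Phi s d" "card (supp z) \<le> s"
  shows "(norm (Phi *v z))\<^sup>2 \<le> (1 + d) * (norm z)\<^sup>2"
  using assms by (auto simp: rip_bound_def sparse_def)

lemma card_le_ins:
  fixes A :: "'n::finite set"
  assumes "A \<subseteq> insert j T" "card T = K"
  shows "card A \<le> K + 1"
proof -
  have "card A \<le> card (insert j T)" using assms(1) by (rule card_mono[rotated]) simp
  also have "\<dots> \<le> card T + 1" by (simp add: card_insert_le_m1 card_insert_if)
  finally show ?thesis using assms(2) by simp
qed

lemma orth_comb:
  fixes Phi :: "real^'n^'m"
  assumes "\<forall>w. supp w \<subseteq> Tp \<longrightarrow> p \<bullet> (Phi *v w) = 0"
    "\<forall>w. supp w \<subseteq> Tp \<longrightarrow> q \<bullet> (Phi *v w) = 0"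
  shows "\<forall>w. supp w \<subseteq> Tp \<longrightarrow> (p + t *\<^sub>R q) \<bullet> (Phi *v w) = 0"
    "\<forall>w. supp w \<subseteq> Tp \<longrightarrow> (p - q) \<bullet> (Phi *v w) = 0"
  using assms by (auto simp: inner_add_left inner_diff_left)

lemma omp_step:
  fixes Phi :: "real^'n^'m" and x :: "real^'n" and v :: "real^'m"
  assumes rip: "rip_bound Phi (K+1) d"
    and T: "card (supp x) = K"
    and Tp: "Tp \<subseteq> supp x"
    and S: "supp x - Tp \<noteq> {}"
    and D: "1 - (sqrt K + 1) * d > 0"
    and cond: "(1 - (sqrt K + 1) * d) * sqrt m > 2 * sqrt (1+d) * norm v"
    and m: "\<forall>j\<in>supp x. m \<le> (x$j)^2"
    and tk: "tk \<notin> Tp"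
    and maxp: "\<forall>i. i \<notin> Tp \<longrightarrow> \<bar>column i Phi \<bullet> r\<bar> \<le> \<bar>column tk Phi \<bullet> r\<bar>"
    and r: "r = ls_residual Phi (Phi *v x + v) Tp"
  shows "tk \<in> supp x"
proof (rule ccontr)
  assume jT: "tk \<notin> supp x"
  define j where "j = tk"
  define T where "T = supp x"
  define S where "S = T - Tp"
  define s where "s = card S"
  define xS where "xS = restr S x"
  define U where "U = norm xS"
  define M where "M = \<bar>column j Phi \<bullet> r\<bar>"
  have d0: "0 \<le> d" using rip by (auto simp: rip_bound_def)
  have Sne: "S \<noteq> {}" using S unfolding S_def T_def .
  have s1: "s \<ge> 1" using Sne unfolding s_def by (simp add: Suc_le_eq card_gt_0_iff)
  have sK: "s \<le> K" unfolding s_def S_def T_def using T card_mono[of "supp x" "supp x - Tp"] by auto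
  have jT': "j \<notin> T" "j \<notin> Tp" "j \<notin> S" using jT tk Tp unfolding j_def T_def S_def by auto
  have xSi: "xS $ i = (if i \<in> S then x $ i else 0)" for i by (simp add: xS_def restr_def)
  have suppxS: "supp xS \<subseteq> S" unfolding xS_def using supp_restr by blast
  have U2: "U^2 = (\<Sum>i\<in>S. (x $ i)^2)"
    unfolding U_def norm_sq_supp[OF suppxS] by (simp add: xSi)
  have U0: "U \<ge> 0" unfolding U_def by simp
  have m0: "sqrt m > 0"
  proof -
    have "2 * sqrt (1+d) * norm v \<ge> 0" using d0 by simp
    hence "(1 - (sqrt K + 1) * d) * sqrt m > 0" using cond by linarith
    thus ?thesis using D by (simp add: zero_less_mult_iff)
  qed
  have Um: "U^2 \<ge> s * m"
  proof -
    have "(\<Sum>i\<in>S. m) \<le> (\<Sum>i\<in>S. (x $ i)^2)"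
      by (rule sum_mono) (use m in \<open>auto simp: S_def T_def\<close>)
    thus ?thesis using U2 unfolding s_def by simp
  qed
  have Usm: "U \<ge> sqrt s * sqrt m"
  proof -
    have "sqrt (s * m) \<le> sqrt (U^2)" using Um by (rule real_sqrt_le_mono)
    thus ?thesis using U0 by (simp add: real_sqrt_mult)
  qed
  have Upos: "U > 0"
  proof -
    have "sqrt s \<ge> 1" using s1 by simp
    hence "sqrt s * sqrt m > 0" using m0 by simp
    thus ?thesis using Usm by linarith
  qed
  obtain a where a: "supp a \<subseteq> Tp" "r = (Phi *v x + v) - Phi *v a"
      "\<forall>w. supp w \<subseteq> Tp \<longrightarrow> r \<bullet> (Phi *v w) = 0"
    using ls_props[of Tp Phi "Phi *v x + v"] unfolding r by blast
  obtain a1 where a1: "supp a1 \<subseteq> Tp" "\<forall>w. supp w \<subseteq> Tp \<longrightarrow> (Phi *v x - Phi *v a1) \<bullet> (Phi *v w) = 0"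
    using orth_exists[of Tp "Phi *v x" Phi] by blast
  define h where "h = Phi *v x - Phi *v a1"
  have oh: "\<forall>w. supp w \<subseteq> Tp \<longrightarrow> h \<bullet> (Phi *v w) = 0" using a1(2) unfolding h_def .
  define w where "w = r - h"
  have ow: "\<forall>z. supp z \<subseteq> Tp \<longrightarrow> w \<bullet> (Phi *v z) = 0"
    unfolding w_def using orth_comb(2)[OF a(3) oh] .
  have wv: "w = v - Phi *v (a - a1)"
    unfolding w_def h_def a(2) by (simp add: matrix_vector_mult_diff_distrib)
  have nw: "norm w \<le> norm v"
  proof -
    have "(norm w)\<^sup>2 \<le> (norm v)\<^sup>2"
      by (rule pyth_le[OF ow wv]) (use a(1) a1(1) in \<open>rule supp_sub_diff\<close>)
    thus ?thesis by (simp add: power_mono_iff)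
  qed
  define d1 where "d1 = x - a1"
  have hd1: "h = Phi *v d1" unfolding h_def d1_def by (simp add: matrix_vector_mult_diff_distrib)
  have d1i: "i \<in> S \<Longrightarrow> d1 $ i = x $ i" for i
    using a1(1) unfolding d1_def S_def supp_def by auto
  have suppd1: "supp d1 \<subseteq> T" unfolding d1_def T_def using supp_diff[of x a1] a1(1) Tp by blast
  define c1 where "c1 = a1 - (x - xS)"
  have suppc1: "supp c1 \<subseteq> Tp"
  proof -
    have "supp (x - xS) \<subseteq> Tp" unfolding supp_def using xSi by (auto simp: S_def T_def supp_def)
    thus ?thesis unfolding c1_def using a1(1) by (rule supp_sub_diff[rotated])
  qed
  have hxS: "h = Phi *v xS - Phi *v c1"
    unfolding h_def c1_def by (simp add: matrix_vector_mult_diff_distrib algebra_simps)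
  have H_lo: "(norm h)\<^sup>2 \<ge> (1 - d) * U^2"
  proof -
    have "card (supp d1) \<le> K + 1" using card_le_ins[of "supp d1" tk T K] suppd1 T unfolding T_def by auto
    hence "(1 - d) * (norm d1)\<^sup>2 \<le> (norm h)\<^sup>2" unfolding hd1 by (rule rip_lo[OF rip])
    moreover have "U^2 \<le> (norm d1)\<^sup>2"
    proof -
      have "restr S d1 = xS" unfolding xS_def restr_def by (rule arg_cong[where f=vec_lambda]) (auto simp: d1i)
      thus ?thesis using norm_restr_le[of S d1] unfolding U_def by simp
    qed
    moreover have "1 - d \<ge> 0" using rip by (auto simp: rip_bound_def)
    ultimately show ?thesis by (meson mult_left_mono order_trans)
  qed
  have H_hi: "norm h \<le> sqrt (1 + d) * U"
  proof -
    have "(norm h)\<^sup>2 \<le> (norm (Phi *v xS))\<^sup>2" by (rule pyth_le[OF oh hxS suppc1])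
    also have "\<dots> \<le> (1 + d) * U^2" unfolding U_def
      by (rule rip_hi[OF rip]) (use card_le_ins[of "supp xS" tk T K] suppxS T in \<open>auto simp: T_def S_def\<close>)
    finally have "sqrt ((norm h)\<^sup>2) \<le> sqrt ((1+d) * U^2)" by (rule real_sqrt_le_mono)
    thus ?thesis using U0 by (simp add: real_sqrt_mult)
  qed
  have sum_eq: "(Phi *v xS) \<bullet> r = (\<Sum>i\<in>S. x $ i * (column i Phi \<bullet> r))"
    unfolding mult_inner_supp[OF suppxS] by (simp add: xSi)
  have corr_lo: "(Phi *v xS) \<bullet> r \<ge> (1 - d) * U^2 - sqrt (1 + d) * U * norm v"
  proof -
    have "(Phi *v xS) = h + Phi *v c1" using hxS by simp
    hence "(Phi *v xS) \<bullet> r = h \<bullet> r + r \<bullet> (Phi *v c1)" by (simp only: inner_add_left inner_add_right inner_commute[of _ r])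
    moreover have "r \<bullet> (Phi *v c1) = 0" using a(3) suppc1 by blast
    moreover have "h \<bullet> r = (norm h)\<^sup>2 + h \<bullet> w"
      unfolding w_def by (simp add: inner_diff_right power2_norm_eq_inner)
    ultimately have e: "(Phi *v xS) \<bullet> r = (norm h)\<^sup>2 + h \<bullet> w" by simp
    have "\<bar>h \<bullet> w\<bar> \<le> norm h * norm w" by (rule Cauchy_Schwarz_ineq2)
    also have "\<dots> \<le> (sqrt (1 + d) * U) * norm v"
      using H_hi nw U0 d0 by (intro mult_mono) auto
    finally have "h \<bullet> w \<ge> - (sqrt (1 + d) * U * norm v)" by linarith
    thus ?thesis using e H_lo by linarith
  qed
  have corr_hi: "(Phi *v xS) \<bullet> r \<le> sqrt s * U * M"
  proof -
    have "(\<Sum>i\<in>S. x $ i * (column i Phi \<bullet> r)) \<le> (\<Sum>i\<in>S. \<bar>x $ i\<bar> * M)"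
    proof (rule sum_mono)
      fix i assume i: "i \<in> S"
      hence "i \<notin> Tp" unfolding S_def by simp
      hence "\<bar>column i Phi \<bullet> r\<bar> \<le> M" using maxp unfolding M_def j_def by blast
      hence "\<bar>x $ i\<bar> * \<bar>column i Phi \<bullet> r\<bar> \<le> \<bar>x $ i\<bar> * M" by (simp add: mult_left_mono)
      thus "x $ i * (column i Phi \<bullet> r) \<le> \<bar>x $ i\<bar> * M"
        by (metis abs_ge_self abs_mult order_trans)
    qed
    also have "\<dots> = (\<Sum>i\<in>S. \<bar>x $ i\<bar>) * M" by (simp add: sum_distrib_right)
    also have "\<dots> \<le> (sqrt s * U) * M"
    proof (rule mult_right_mono)
      show "0 \<le> M" unfolding M_def by simp
      have "(\<Sum>i\<in>S. \<bar>x $ i\<bar> * 1)\<^sup>2 \<le> (\<Sum>i\<in>S. \<bar>x $ i\<bar>\<^sup>2) * (\<Sum>i\<in>S. 1\<^sup>2)"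
        by (rule Cauchy_Schwarz_ineq_sum)
      also have "\<dots> = U^2 * s" using U2 unfolding s_def by simp
      also have "\<dots> = (sqrt s * U)^2" by (simp add: power_mult_distrib)
      finally have "(\<Sum>i\<in>S. \<bar>x $ i\<bar>)\<^sup>2 \<le> (sqrt s * U)^2" by simp
      thus "(\<Sum>i\<in>S. \<bar>x $ i\<bar>) \<le> sqrt s * U"
        by (rule power2_le_imp_le) (use U0 in simp)
    qed
    finally show ?thesis using sum_eq by simp
  qed
  have wrong: "M \<le> d * U + sqrt (1 + d) * norm v"
  proof -
    obtain a2 where a2: "supp a2 \<subseteq> Tp" "\<forall>w. supp w \<subseteq> Tp \<longrightarrow> (column j Phi - Phi *v a2) \<bullet> (Phi *v w) = 0"
      using orth_exists[of Tp "column j Phi" Phi] by blast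
    define g where "g = column j Phi - Phi *v a2"
    have og: "\<forall>w. supp w \<subseteq> Tp \<longrightarrow> g \<bullet> (Phi *v w) = 0" using a2(2) unfolding g_def .
    define e where "e = axis j (1::real)"
    have Pe: "Phi *v e = column j Phi" unfolding e_def by (rule matrix_vector_mult_basis)
    have suppe: "supp e \<subseteq> {j}" unfolding e_def by (rule supp_axis)
    have ei: "e $ i = (if i = j then 1 else 0)" for i by (simp add: e_def axis_def)
    have a2j: "a2 $ j = 0" using a2(1) jT' unfolding supp_def by auto
    have a2S: "i \<in> S \<Longrightarrow> a2 $ i = 0" for i using a2(1) unfolding supp_def S_def by auto
    have d1j: "d1 $ j = 0" using suppd1 jT' unfolding supp_def by auto
    have gam: "column j Phi \<bullet> h = g \<bullet> h"
    proof -
      have "column j Phi = g + Phi *v a2" unfolding g_def by simp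
      moreover have "h \<bullet> (Phi *v a2) = 0" using oh a2(1) by blast
      ultimately show ?thesis by (simp add: inner_add_left inner_commute[of "Phi *v a2" h])
    qed
    have bnd: "(1-d)*(U^2+t^2) \<le> (norm (h + t *\<^sub>R g))\<^sup>2 \<and> (norm (h + t *\<^sub>R g))\<^sup>2 \<le> (1+d)*(U^2+t^2)" for t
    proof
      define zt where "zt = d1 + t *\<^sub>R (e - a2)"
      have Pz: "Phi *v zt = h + t *\<^sub>R g"
        unfolding zt_def g_def hd1 by (simp add: matrix_vector_right_distrib matrix_vector_mult_scaleR matrix_vector_mult_diff_distrib Pe)
      have "supp zt \<subseteq> insert j T"
        unfolding zt_def using suppd1 suppe a2(1) Tp supp_add supp_scale supp_diff unfolding T_def by blast
      hence cz: "card (supp zt) \<le> K + 1" using card_le_ins T unfolding T_def by blast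
      have "U^2 + t^2 \<le> (norm zt)\<^sup>2"
      proof -
        have "(\<Sum>i\<in>insert j S. (zt $ i)^2) \<le> (\<Sum>i\<in>UNIV. (zt $ i)^2)"
          by (rule sum_mono2) auto
        moreover have "(\<Sum>i\<in>insert j S. (zt $ i)^2) = t^2 + (\<Sum>i\<in>S. (x $ i)^2)"
          using jT' by (auto simp: zt_def d1j a2j ei d1i a2S intro!: sum.cong)
        ultimately show ?thesis unfolding norm_sq_vec U2 by simp
      qed
      moreover have "1 - d \<ge> 0" using rip by (auto simp: rip_bound_def)
      ultimately have "(1-d)*(U^2+t^2) \<le> (1-d) * (norm zt)\<^sup>2" by (rule mult_left_mono)
      also have "\<dots> \<le> (norm (h + t *\<^sub>R g))\<^sup>2" using rip_lo[OF rip cz] Pz by simp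
      finally show "(1-d)*(U^2+t^2) \<le> (norm (h + t *\<^sub>R g))\<^sup>2" .
      define qt where "qt = xS + t *\<^sub>R e"
      have "h + t *\<^sub>R g = Phi *v qt - Phi *v (c1 + t *\<^sub>R a2)"
        unfolding qt_def hxS g_def
        by (simp add: matrix_vector_right_distrib matrix_vector_mult_scaleR matrix_vector_mult_diff_distrib Pe algebra_simps)
      moreover have "supp (c1 + t *\<^sub>R a2) \<subseteq> Tp" using suppc1 a2(1) by (intro supp_sub_add supp_sub_scale)
      ultimately have "(norm (h + t *\<^sub>R g))\<^sup>2 \<le> (norm (Phi *v qt))\<^sup>2"
        using pyth_le[OF orth_comb(1)[OF oh og]] by blast
      also have "\<dots> \<le> (1 + d) * (norm qt)\<^sup>2"
      proof (rule rip_hi[OF rip])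
        have "supp qt \<subseteq> insert j T"
          unfolding qt_def using suppxS suppe supp_add supp_scale unfolding S_def T_def by blast
        thus "card (supp qt) \<le> K + 1" using card_le_ins T unfolding T_def by blast
      qed
      also have "(norm qt)\<^sup>2 = U^2 + t^2"
      proof -
        have "supp qt \<subseteq> insert j S"
          unfolding qt_def using suppxS suppe supp_add supp_scale by blast
        hence "(norm qt)\<^sup>2 = (\<Sum>i\<in>insert j S. (qt $ i)^2)" by (rule norm_sq_supp)
        also have "\<dots> = t^2 + (\<Sum>i\<in>S. (x $ i)^2)"
          using jT' by (auto simp: qt_def xSi ei intro!: sum.cong)
        finally show ?thesis using U2 by simp
      qed
      finally show "(norm (h + t *\<^sub>R g))\<^sup>2 \<le> (1+d)*(U^2+t^2)" .
    qed
    have expand: "(norm (h + t *\<^sub>R g))\<^sup>2 = (norm h)\<^sup>2 + 2 * t * (g \<bullet> h) + t^2 * (norm g)\<^sup>2" for t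
      unfolding power2_norm_eq_inner
      by (simp add: inner_add_left inner_add_right inner_commute power2_eq_square algebra_simps)
    have p1: "4 * U * (g \<bullet> h) \<le> 4 * d * U^2"
      using bnd[of U] bnd[of "-U"] expand[of U] expand[of "-U"] by (simp add: algebra_simps)
    have p2: "- (4 * U * (g \<bullet> h)) \<le> 4 * d * U^2"
      using bnd[of U] bnd[of "-U"] expand[of U] expand[of "-U"] by (simp add: algebra_simps)
    have "4 * U * \<bar>g \<bullet> h\<bar> \<le> 4 * U * (d * U)"
      using p1 p2 Upos by (cases "g \<bullet> h \<ge> 0") (simp_all add: power2_eq_square algebra_simps)
    hence gh: "\<bar>column j Phi \<bullet> h\<bar> \<le> d * U" using Upos gam by simp
    have "(norm (column j Phi))\<^sup>2 \<le> (1 + d) * (norm e)\<^sup>2"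
      unfolding Pe[symmetric]
    proof (rule rip_hi[OF rip])
      have "card (supp e) \<le> 1" using card_mono[OF _ suppe] by simp
      thus "card (supp e) \<le> K + 1" by simp
    qed
    also have "norm e = 1" unfolding e_def by simp
    finally have "(norm (column j Phi))\<^sup>2 \<le> (sqrt (1+d))^2" using d0 by simp
    hence nc: "norm (column j Phi) \<le> sqrt (1+d)" by (rule power2_le_imp_le) (use d0 in simp)
    have "\<bar>column j Phi \<bullet> w\<bar> \<le> norm (column j Phi) * norm w" by (rule Cauchy_Schwarz_ineq2)
    also have "\<dots> \<le> sqrt (1+d) * norm v" using nc nw d0 by (intro mult_mono) auto
    finally have cw: "\<bar>column j Phi \<bullet> w\<bar> \<le> sqrt (1+d) * norm v" .
    have "M = \<bar>column j Phi \<bullet> h + column j Phi \<bullet> w\<bar>"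
      unfolding M_def w_def by (simp add: inner_diff_right)
    thus ?thesis using gh cw by linarith
  qed
  define q where "q = sqrt s"
  define p where "p = sqrt (1 + d)"
  define nv where "nv = norm v"
  have q1: "q \<ge> 1" unfolding q_def using s1 by simp
  have qK: "q \<le> sqrt K" unfolding q_def using sK by simp
  have p0: "p \<ge> 0" unfolding p_def using d0 by simp
  have nv0: "nv \<ge> 0" unfolding nv_def by simp
  have "(1 - d) * U^2 - p * U * nv \<le> q * U * M" using corr_lo corr_hi unfolding p_def nv_def q_def by linarith
  also have "\<dots> \<le> q * U * (d * U + p * nv)"
    using wrong q1 U0 unfolding p_def nv_def by (intro mult_left_mono) auto
  finally have "U * ((1 - d - q * d) * U) \<le> U * ((1 + q) * p * nv)"
    by (simp add: algebra_simps power2_eq_square)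
  hence A: "(1 - d - q * d) * U \<le> (1 + q) * p * nv" using Upos by simp
  have B: "(1 - (sqrt K + 1) * d) * U \<le> (1 - d - q * d) * U"
    using qK d0 U0 by (intro mult_right_mono) (auto simp: algebra_simps intro: mult_left_mono)
  have C: "(1 - (sqrt K + 1) * d) * (q * sqrt m) \<le> (1 - (sqrt K + 1) * d) * U"
    using Usm D unfolding q_def by (intro mult_left_mono) auto
  have E: "q * ((1 - (sqrt K + 1) * d) * sqrt m) > q * (2 * p * nv)"
    using cond q1 unfolding p_def nv_def by simp
  have F: "q * (2 * p * nv) \<ge> (1 + q) * p * nv"
  proof -
    have "p * nv \<ge> 0" using p0 nv0 by simp
    hence "(q - 1) * (p * nv) \<ge> 0" using q1 by simp
    thus ?thesis by (simp add: algebra_simps)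
  qed
  show False using A B C E F by (simp add: algebra_simps)
qed

theorem theorem1:
  fixes Phi :: "real^'n^'m" and x :: "real^'n" and v y :: "real^'m" and K :: nat
  assumes "K \<ge> 1"
    and "\<exists>c. rip_bound Phi (K + 1) c"
    and "rip_delta Phi (K + 1) < 1 / (sqrt (real K) + 1)"
    and "card (supp x) = K"
    and "y = Phi *v x + v"
    and "(if v = 0 then True else sqrt (norm (Phi *v x) ^ 2 / norm v ^ 2) >
           2 * sqrt (real K) * (1 + rip_delta Phi (K + 1)) /
           ((1 - (sqrt (real K) + 1) * rip_delta Phi (K + 1)) * sqrt (MAR x)))"
    and "omp_run Phi y K t"
  shows "(\<forall>k\<in>{1..K}. t k \<in> supp x) \<and> t ` {1..K} = supp x"
proof -
  define d where "d = rip_delta Phi (K + 1)"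
  have rip: "rip_bound Phi (K+1) d" unfolding d_def by (rule rip_delta_bound[OF assms(2)])
  have d0: "d \<ge> 0" using rip by (auto simp: rip_bound_def)
  define Dd where "Dd = 1 - (sqrt K + 1) * d"
  have Dpos: "Dd > 0"
  proof -
    have "d < 1 / (sqrt K + 1)" using assms(3) unfolding d_def .
    moreover have "sqrt K + 1 > 0" by (simp add: add_nonneg_pos)
    ultimately have "d * (sqrt K + 1) < 1" by (simp add: pos_less_divide_eq)
    thus ?thesis unfolding Dd_def by (simp add: algebra_simps)
  qed
  define m where "m = Min ((\<lambda>j. \<bar>x $ j\<bar> ^ 2) ` supp x)"
  have Tne: "supp x \<noteq> {}" using assms(1,4) by auto
  have mle: "\<forall>j\<in>supp x. m \<le> (x$j)^2" unfolding m_def by (auto intro: Min_le)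
  have mpos: "m > 0"
  proof -
    have "m \<in> (\<lambda>j. \<bar>x $ j\<bar> ^ 2) ` supp x" unfolding m_def using Tne by (intro Min_in) auto
    thus ?thesis by (auto simp: supp_def)
  qed
  have cond: "Dd * sqrt m > 2 * sqrt (1+d) * norm v"
  proof (cases "v = 0")
    case True thus ?thesis using Dpos mpos by simp
  next
    case False
    define nx where "nx = norm x"
    define P where "P = norm (Phi *v x)"
    define nv where "nv = norm v"
    define sm where "sm = sqrt m"
    define sK where "sK = sqrt (real K)"
    define p where "p = sqrt (1 + d)"
    have nv0: "nv > 0" using False unfolding nv_def by simp
    have nx0: "nx > 0" using Tne unfolding nx_def supp_def by auto
    have sm0: "sm > 0" using mpos unfolding sm_def by simp
    have sK0: "sK > 0" using assms(1) unfolding sK_def by simp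
    have p0: "p > 0" using d0 unfolding p_def by simp
    have P0: "P \<ge> 0" unfolding P_def by simp
    have hyp: "P / nv > 2 * sK * (1 + d) / (Dd * sqrt (MAR x))"
      using assms(6) False unfolding P_def nv_def sK_def Dd_def d_def
      by (simp add: real_sqrt_divide)
    have "MAR x = m * K / nx^2" unfolding MAR_def m_def nx_def assms(4) by simp
    hence sq: "sqrt (MAR x) = sm * sK / nx" using nx0
      by (simp add: sm_def sK_def real_sqrt_divide real_sqrt_mult)
    have "2 * sK * (1 + d) / (Dd * sqrt (MAR x)) = 2 * (1 + d) * nx / (Dd * sm)"
      unfolding sq using sK0 nx0 sm0 Dpos by (simp add: field_simps)
    hence "P / nv > 2 * (1 + d) * nx / (Dd * sm)" using hyp by simp
    hence "2 * (1 + d) * nx / (Dd * sm) * nv < P" using nv0 by (simp add: pos_less_divide_eq)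
    hence "(2 * (1 + d) * nx * nv) / (Dd * sm) < P" by simp
    hence h1: "P * (Dd * sm) > 2 * (1 + d) * nx * nv" using Dpos sm0
      by (simp add: pos_divide_less_eq)
    have pp: "p * p = 1 + d" unfolding p_def using d0 by simp
    have "P^2 \<le> (1 + d) * nx^2" unfolding P_def nx_def
      by (rule rip_hi[OF rip]) (simp add: assms(4))
    also have "(1 + d) * nx^2 = (p * nx)^2"
    proof -
      have "(p * nx)^2 = (p * p) * nx^2" by (simp add: power2_eq_square)
      thus ?thesis unfolding pp by simp
    qed
    finally have "P^2 \<le> (p * nx)^2" .
    hence Ple: "P \<le> p * nx" by (rule power2_le_imp_le) (use p0 nx0 in simp)
    have "P * (Dd * sm) \<le> p * nx * (Dd * sm)" using Ple Dpos sm0 by (intro mult_right_mono) auto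
    hence "p * nx * (Dd * sm) > 2 * (p * p) * nx * nv" using h1 unfolding pp by linarith
    hence "(p * nx) * (Dd * sm) > (p * nx) * (2 * p * nv)" by (simp add: mult.assoc mult.left_commute)
    hence "Dd * sm > 2 * p * nv" using p0 nx0 by (simp add: mult_less_cancel_left_pos)
    thus ?thesis unfolding sm_def p_def nv_def .
  qed
  have run: "\<And>k. k \<in> {1..K} \<Longrightarrow> t k \<notin> t ` {1..<k} \<and>
      (\<forall>i. i \<notin> t ` {1..<k} \<longrightarrow> \<bar>column i Phi \<bullet> ls_residual Phi y (t ` {1..<k})\<bar>
          \<le> \<bar>column (t k) Phi \<bullet> ls_residual Phi y (t ` {1..<k})\<bar>)"
    using assms(7) unfolding omp_run_def Let_def by blast
  have good: "k \<in> {1..K} \<Longrightarrow> t k \<in> supp x" for k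
  proof (induction k rule: less_induct)
    case (less k)
    have Tp: "t ` {1..<k} \<subseteq> supp x" using less.IH less.prems by auto
    have "card (t ` {1..<k}) \<le> k - 1" using card_image_le[of "{1..<k}" t] by simp
    hence cT: "card (t ` {1..<k}) < K" using less.prems by auto
    have S: "supp x - t ` {1..<k} \<noteq> {}"
    proof
      assume "supp x - t ` {1..<k} = {}"
      hence "supp x \<subseteq> t ` {1..<k}" by blast
      hence "card (supp x) \<le> card (t ` {1..<k})" by (rule card_mono[rotated]) simp
      thus False using cT assms(4) by simp
    qed
    show ?case
      by (rule omp_step[OF rip assms(4) Tp S, where tk="t k" and v=v and m=m and r="ls_residual Phi y (t ` {1..<k})"])
         (use Dpos cond run[OF less.prems] assms(5) mle in \<open>auto simp: Dd_def\<close>)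
  qed
  have inj: "inj_on t {1..K}"
  proof (rule inj_onI)
    fix a b assume ab: "a \<in> {1..K}" "b \<in> {1..K}" "t a = t b"
    show "a = b"
    proof (rule ccontr)
      assume "a \<noteq> b"
      hence "a < b \<or> b < a" by arith
      thus False
      proof
        assume "a < b" thus False using run[OF ab(2)] ab by (metis atLeastLessThan_iff atLeastAtMost_iff imageI)
      next
        assume "b < a" thus False using run[OF ab(1)] ab by (metis atLeastLessThan_iff atLeastAtMost_iff imageI)
      qed
    qed
  qed
  have sub: "t ` {1..K} \<subseteq> supp x" using good by auto
  have "card (t ` {1..K}) = K" using card_image[OF inj] by simp
  hence "t ` {1..K} = supp x" using sub assms(4) by (intro card_subset_eq) auto
  thus ?thesis using good by auto
qed

end
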